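(* Let $\mu$ be a probability measure on $\mathbb{R}$ satisfying the standing assumptions below and $\int_{\mathbb{R}}|x|\,d\mu<+\infty$, and let $I$ be its support interval. Let $k\in\mathbb{N}$ and let $\vec v=(v_1,\dots,v_k)\in(0,1)^k$ be a percentile vector. Let $\vec X_n$ be a vector of $n$ i.i.d. random variables with law $\mu$. Then $\mathbb{E}[SC_{\vec v}(\vec X_n)]\to W_1(\mu,\nu_{Q_{\vec v}})$ as $n\to\infty$, where \[ \nu_{Q_{\vec v}}=\sum_{i=1}^k\big(F_\mu(z_i)-F_\mu(z_{i-1})\big)\,\delta_{F_\mu^{[-1]}(v_i)}, \] with $z_i=\frac{F_\mu^{[-1]}(v_i)+F_\mu^{[-1]}(v_{i+1})}{2}$ for $i=1,\dots,k-1$, $z_0=\inf_{x\in I}x$ and $z_k=\sup_{x\in I}x$.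
   Context: For $\vec x\in\mathbb{R}^n$ and $\vec y\in\mathbb{R}^k$, $SC(\vec x,\vec y)=\frac1n\sum_{i=1}^n\min_{j\in[k]}|x_i-y_j|$. A percentile vector is $\vec v=(v_1,\dots,v_k)$ with $0\le v_1\le\dots\le v_k\le1$; the percentile mechanism $\mathcal{PM}_{\vec v}$ sorts the reports as $x_{(1)}\le\dots\le x_{(n)}$ and places facility $j$ at $x_{(\lfloor (n-1)v_j\rfloor+1)}$; $SC_{\vec v}(\vec x)$ denotes the Social Cost of the output of $\mathcal{PM}_{\vec v}$ on $\vec x$. $W_1(\alpha,\beta)=\min_{\pi\in\Pi(\alpha,\beta)}\int|x-y|\,d\pi$ is the 1-Wasserstein distance. $F_\mu$ is the c.d.f. of $\mu$ and $F_\mu^{[-1]}(t)=\inf\{x:F_\mu(x)\ge t\}$ its pseudo-inverse on $(0,1)$. Standing assumptions on $\mu$: absolutely continuous with density $\rho_\mu$; support an interval (bounded or not) on whose interior $\rho_\mu>0$; $\rho_\mu$ differentiable on the support. *)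

theory Defs
  imports "HOL-Probability.Probability"
begin

definition SC :: "nat \<Rightarrow> (nat \<Rightarrow> real) \<Rightarrow> nat \<Rightarrow> (nat \<Rightarrow> real) \<Rightarrow> real" where
  "SC n x k y = (1 / real n) * (\<Sum>i<n. Min ((\<lambda>j. \<bar>x i - y j\<bar>) ` {..<k}))"

text \<open>Percentile mechanism: facility j (0-based) is placed at the
 (floor((n-1) v_j) + 1)-th smallest report, i.e. 0-based index floor((n-1) v_j)
 of the sorted list of reports.\<close>
definition PM :: "nat \<Rightarrow> (nat \<Rightarrow> real) \<Rightarrow> (nat \<Rightarrow> real) \<Rightarrow> nat \<Rightarrow> real" where
  "PM n v x j = sort (map x [0..<n]) ! nat \<lfloor>(real n - 1) * v j\<rfloor>"

definition SC_pm :: "nat \<Rightarrow> (nat \<Rightarrow> real) \<Rightarrow> nat \<Rightarrow> (nat \<Rightarrow> real) \<Rightarrow> real" where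
  "SC_pm k v n x = SC n x k (PM n v x)"

definition couplings :: "real measure \<Rightarrow> real measure \<Rightarrow> (real \<times> real) measure set" where
  "couplings \<alpha> \<beta> = {\<pi>. sets \<pi> = sets (borel \<Otimes>\<^sub>M borel) \<and>
       distr \<pi> borel fst = \<alpha> \<and> distr \<pi> borel snd = \<beta>}"

definition W1 :: "real measure \<Rightarrow> real measure \<Rightarrow> ennreal" where
  "W1 \<alpha> \<beta> = (INF \<pi>\<in>couplings \<alpha> \<beta>. \<integral>\<^sup>+ p. ennreal \<bar>fst p - snd p\<bar> \<partial>\<pi>)"

definition cdf :: "real measure \<Rightarrow> real \<Rightarrow> real" where
  "cdf \<mu> x = measure \<mu> {..x}"

definition cdf_inv :: "real measure \<Rightarrow> real \<Rightarrow> real" where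
  "cdf_inv \<mu> t = Inf {x. cdf \<mu> x \<ge> t}"

text \<open>With 0-based indices, atom i (i<k) sits at
 q_i = F^{-1}(v_i) and has mass F(z_{i+1}) - F(z_i), where z_i = (q_{i-1}+q_i)/2 for
 0<i<k, F(z_0) = 0 (z_0 = inf I) and F(z_k) = 1 (z_k = sup I).\<close>
definition zF :: "real measure \<Rightarrow> nat \<Rightarrow> (nat \<Rightarrow> real) \<Rightarrow> nat \<Rightarrow> real" where
  "zF \<mu> k v i = (if i = 0 then 0 else if i \<ge> k then 1
      else cdf \<mu> ((cdf_inv \<mu> (v (i - 1)) + cdf_inv \<mu> (v i)) / 2))"

definition nuQ :: "real measure \<Rightarrow> nat \<Rightarrow> (nat \<Rightarrow> real) \<Rightarrow> real measure" where
  "nuQ \<mu> k v = distr (point_measure {..<k} (\<lambda>i. ennreal (zF \<mu> k v (Suc i) - zF \<mu> k v i)))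
      borel (\<lambda>i. cdf_inv \<mu> (v i))"

end

theory Submission
  imports Defs
begin

lemma indep_coords:
  fixes M :: "'a measure" and I :: "'i set"
  assumes M: "prob_space M"
  shows "prob_space.indep_vars (PiM I (\<lambda>_. M)) (\<lambda>_. M) (\<lambda>i x. x i) I"
proof -
  interpret P: prob_space "PiM I (\<lambda>_. M)"
    by (intro prob_space_PiM M)
  show ?thesis
  proof (cases "I = {}")
    case True
    show ?thesis unfolding P.indep_vars_def P.indep_sets_def by (simp add: True)
  next
    case False
    have d: "distr (PiM I (\<lambda>_. M)) M (\<lambda>x. x i) = M" if "i \<in> I" for i
      using distr_PiM_component[of I "\<lambda>_. M" i] M that by simp
    show ?thesis
    proof (subst P.indep_vars_iff_distr_eq_PiM'[OF False])
      show "(\<lambda>x. x i) \<in> measurable (PiM I (\<lambda>_. M)) M" if "i \<in> I" for i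
        using that by (rule measurable_component_singleton)
      have "(\<Pi>\<^sub>M i\<in>I. distr (Pi\<^sub>M I (\<lambda>_. M)) M (\<lambda>x. x i)) = PiM I (\<lambda>_. M)"
        by (intro PiM_cong) (simp_all add: d)
      moreover have "distr (Pi\<^sub>M I (\<lambda>_. M)) (Pi\<^sub>M I (\<lambda>_. M)) (\<lambda>x. restrict (\<lambda>i. x i) I) = PiM I (\<lambda>_. M)"
      proof -
        have "distr (Pi\<^sub>M I (\<lambda>_. M)) (Pi\<^sub>M I (\<lambda>_. M)) (\<lambda>x. restrict (\<lambda>i. x i) I)
            = distr (Pi\<^sub>M I (\<lambda>_. M)) (Pi\<^sub>M I (\<lambda>_. M)) (\<lambda>x. x)"
          by (intro distr_cong) (auto simp: space_PiM)
        then show ?thesis by simp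
      qed
      ultimately show "distr (Pi\<^sub>M I (\<lambda>_. M)) (Pi\<^sub>M I (\<lambda>_. M)) (\<lambda>x. restrict (\<lambda>i. x i) I) =
          (\<Pi>\<^sub>M i\<in>I. distr (Pi\<^sub>M I (\<lambda>_. M)) M (\<lambda>x. x i))" by simp
    qed
  qed
qed

lemma expect_coord:
  fixes M :: "real measure" and f :: "real \<Rightarrow> real"
  assumes M: "prob_space M" and i: "i \<in> I" and f: "f \<in> borel_measurable M"
  shows "integral\<^sup>L (PiM I (\<lambda>_. M)) (\<lambda>x. f (x i)) = integral\<^sup>L M f"
proof -
  have "integral\<^sup>L (PiM I (\<lambda>_. M)) (\<lambda>x. f (x i)) = integral\<^sup>L (distr (PiM I (\<lambda>_. M)) M (\<lambda>x. x i)) f"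
    using integral_distr[OF measurable_component_singleton[OF i, of "\<lambda>_. M"] f] by simp
  also have "distr (PiM I (\<lambda>_. M)) M (\<lambda>x. x i) = M"
    using distr_PiM_component[of I "\<lambda>_. M" i] M i by simp
  finally show ?thesis .
qed

lemma hoeff_coords:
  fixes M :: "real measure"
  assumes M: "prob_space M" and sb: "sets M = sets borel" and n: "n > 0" and e: "\<epsilon> \<ge> 0"
  shows "measure (PiM {..<n} (\<lambda>_. M)) {x \<in> space (PiM {..<n} (\<lambda>_. M)).
            (\<Sum>i<n. indicator {..a} (x i)) \<le> real n * measure M {..a} - \<epsilon>} \<le> exp (-2*\<epsilon>\<^sup>2 / n)"
    and "measure (PiM {..<n} (\<lambda>_. M)) {x \<in> space (PiM {..<n} (\<lambda>_. M)).
            (\<Sum>i<n. indicator {..a} (x i)) \<ge> real n * measure M {..a} + \<epsilon>} \<le> exp (-2*\<epsilon>\<^sup>2 / n)"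
proof -
  interpret P: prob_space "PiM {..<n} (\<lambda>_. M)"
    by (intro prob_space_PiM M)
  have am: "{..a} \<in> sets M" using sb by simp
  have ind: "P.indep_vars (\<lambda>_. borel) (\<lambda>i x. indicator {..a} (x i) :: real) {..<n}"
    by (rule P.indep_vars_compose2[OF indep_coords[OF M]]) (use am in auto)
  have ex: "P.expectation (\<lambda>x. indicator {..a} (x i) :: real) = measure M {..a}" if "i < n" for i
  proof -
    have "P.expectation (\<lambda>x. indicator {..a} (x i) :: real) = integral\<^sup>L M (indicator {..a})"
      by (rule expect_coord[OF M]) (use that am in auto)
    also have "\<dots> = measure M {..a}"
      using am prob_space.finite_measure[OF M] by (simp add: finite_measure.emeasure_finite)
    finally show ?thesis .
  qed
  interpret H: Hoeffding_ineq "PiM {..<n} (\<lambda>_. M)" "{..<n}" "\<lambda>i x. indicator {..a} (x i) :: real"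
       "\<lambda>_. 0" "\<lambda>_. 1" "real n * measure M {..a}"
  proof unfold_locales
    show "finite {..<n}" by simp
    show "P.indep_vars (\<lambda>_. borel) (\<lambda>i x. indicator {..a} (x i) :: real) {..<n}" by (rule ind)
    show "AE x in PiM {..<n} (\<lambda>_. M). (indicator {..a} (x i) :: real) \<in> {0..1}" for i
      by (auto simp: indicator_def)
    show "real n * measure M {..a} \<equiv> (\<Sum>i<n. P.expectation (\<lambda>x. indicator {..a} (x i) :: real))"
      using ex by simp
  qed
  have pos: "(\<Sum>i<n. ((\<lambda>_. 1::real) i - (\<lambda>_. 0) i)\<^sup>2) > 0" using n by simp
  show "measure (PiM {..<n} (\<lambda>_. M)) {x \<in> space (PiM {..<n} (\<lambda>_. M)).
            (\<Sum>i<n. indicator {..a} (x i)) \<le> real n * measure M {..a} - \<epsilon>} \<le> exp (-2*\<epsilon>\<^sup>2 / n)"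
    using H.Hoeffding_ineq_le[OF e pos] by simp
  show "measure (PiM {..<n} (\<lambda>_. M)) {x \<in> space (PiM {..<n} (\<lambda>_. M)).
            (\<Sum>i<n. indicator {..a} (x i)) \<ge> real n * measure M {..a} + \<epsilon>} \<le> exp (-2*\<epsilon>\<^sup>2 / n)"
    using H.Hoeffding_ineq_ge[OF e pos] by simp
qed

lemma sorted_nth_le_iff:
  fixes s :: "real list"
  assumes s: "sorted s" and m: "m < length s"
  shows "s ! m \<le> a \<longleftrightarrow> m < length (filter (\<lambda>y. y \<le> a) s)"
proof -
  have L: "length (filter (\<lambda>y. y \<le> a) s) = card {j. j < length s \<and> s ! j \<le> a}"
    by (rule length_filter_conv_card)
  show ?thesis
  proof
    assume h: "s ! m \<le> a"
    have "{..m} \<subseteq> {j. j < length s \<and> s ! j \<le> a}"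
    proof
      fix j assume "j \<in> {..m}"
      then have "j \<le> m" by simp
      then have "s ! j \<le> s ! m" using s m by (simp add: sorted_nth_mono)
      then show "j \<in> {j. j < length s \<and> s ! j \<le> a}" using h m \<open>j \<le> m\<close> by auto
    qed
    then have "card {..m} \<le> card {j. j < length s \<and> s ! j \<le> a}"
      by (intro card_mono) auto
    then show "m < length (filter (\<lambda>y. y \<le> a) s)" using L by simp
  next
    assume h: "m < length (filter (\<lambda>y. y \<le> a) s)"
    show "s ! m \<le> a"
    proof (rule ccontr)
      assume "\<not> s ! m \<le> a"
      have "{j. j < length s \<and> s ! j \<le> a} \<subseteq> {..<m}"
      proof
        fix j assume j: "j \<in> {j. j < length s \<and> s ! j \<le> a}"
        show "j \<in> {..<m}"
        proof (rule ccontr)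
          assume "j \<notin> {..<m}"
          then have "m \<le> j" by simp
          then have "s ! m \<le> s ! j" using s j by (simp add: sorted_nth_mono)
          then show False using j \<open>\<not> s ! m \<le> a\<close> by auto
        qed
      qed
      then have "card {j. j < length s \<and> s ! j \<le> a} \<le> card {..<m}"
        by (intro card_mono) auto
      then show False using h L by simp
    qed
  qed
qed

lemma os_le_iff:
  fixes x :: "nat \<Rightarrow> real"
  assumes m: "m < n"
  shows "sort (map x [0..<n]) ! m \<le> a \<longleftrightarrow> m < card {i. i < n \<and> x i \<le> a}"
proof -
  let ?s = "sort (map x [0..<n])"
  have "length (filter (\<lambda>y. y \<le> a) ?s) = length (filter (\<lambda>y. y \<le> a) (map x [0..<n]))"
    by (metis mset_filter mset_sort size_mset)
  also have "\<dots> = card {i. i < n \<and> x i \<le> a}"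
    by (simp add: length_filter_conv_card) (metis (lifting) add_0 diff_zero nth_map_upt)
  finally have e: "length (filter (\<lambda>y. y \<le> a) ?s) = card {i. i < n \<and> x i \<le> a}" .
  show ?thesis using sorted_nth_le_iff[of ?s m a] m e by simp
qed

lemma os_bound:
  fixes x :: "nat \<Rightarrow> real"
  assumes m: "m < n"
  shows "\<bar>sort (map x [0..<n]) ! m\<bar> * real (min (m+1) (n-m)) \<le> (\<Sum>i<n. \<bar>x i\<bar>)"
proof -
  let ?s = "sort (map x [0..<n])"
  have len: "length ?s = n" by simp
  have srt: "sorted ?s" by simp
  have "sum_list (map abs ?s) = sum_list (map abs (map x [0..<n]))"
    by (metis mset_map mset_sort sum_mset_sum_list)
  also have "\<dots> = (\<Sum>i<n. \<bar>x i\<bar>)"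
    by (simp add: sum_list_sum_nth atLeast0LessThan)
  finally have S: "(\<Sum>j<n. \<bar>?s ! j\<bar>) = (\<Sum>i<n. \<bar>x i\<bar>)"
    by (simp add: sum_list_sum_nth atLeast0LessThan)
  show ?thesis
  proof (cases "?s ! m \<ge> 0")
    case True
    have "\<bar>?s ! m\<bar> * real (min (m+1) (n-m)) \<le> \<bar>?s ! m\<bar> * real (n - m)"
      by (intro mult_left_mono) auto
    also have "\<dots> = (\<Sum>j\<in>{m..<n}. \<bar>?s ! m\<bar>)" by simp
    also have "\<dots> \<le> (\<Sum>j\<in>{m..<n}. \<bar>?s ! j\<bar>)"
    proof (intro sum_mono)
      fix j assume "j \<in> {m..<n}"
      then have "?s ! m \<le> ?s ! j" using srt len by (intro sorted_nth_mono) auto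
      then show "\<bar>?s ! m\<bar> \<le> \<bar>?s ! j\<bar>" using True by simp
    qed
    also have "\<dots> \<le> (\<Sum>j<n. \<bar>?s ! j\<bar>)"
      by (intro sum_mono2) auto
    finally show ?thesis using S by simp
  next
    case False
    have "\<bar>?s ! m\<bar> * real (min (m+1) (n-m)) \<le> \<bar>?s ! m\<bar> * real (m+1)"
      by (intro mult_left_mono) auto
    also have "\<dots> = (\<Sum>j\<in>{..m}. \<bar>?s ! m\<bar>)" by simp
    also have "\<dots> \<le> (\<Sum>j\<in>{..m}. \<bar>?s ! j\<bar>)"
    proof (intro sum_mono)
      fix j assume "j \<in> {..m}"
      then have "?s ! j \<le> ?s ! m" using srt len m by (intro sorted_nth_mono) auto
      then show "\<bar>?s ! m\<bar> \<le> \<bar>?s ! j\<bar>" using False by simp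
    qed
    also have "\<dots> \<le> (\<Sum>j<n. \<bar>?s ! j\<bar>)"
      using m by (intro sum_mono2) auto
    finally show ?thesis using S by simp
  qed
qed

lemma exp_lim:
  assumes c: "(c::real) > 0" shows "(\<lambda>n::nat. exp (- (c * real n))) \<longlonglongrightarrow> 0"
proof -
  have "filterlim (\<lambda>n. c * real n) at_top sequentially"
    by (rule filterlim_tendsto_pos_mult_at_top[OF tendsto_const c filterlim_real_sequentially])
  then have "filterlim (\<lambda>n. - (c * real n)) at_bot sequentially"
    by (simp add: filterlim_uminus_at_top)
  then show ?thesis by (rule filterlim_compose[OF exp_at_bot])
qed

lemma tail_lim:
  fixes M :: "real measure"
  assumes mom: "integrable M (\<lambda>x. \<bar>x\<bar>)" and sb: "sets M = sets borel"
  shows "(\<lambda>N::nat. integral\<^sup>L M (\<lambda>x. \<bar>x\<bar> * indicator {x. real N < \<bar>x\<bar>} x)) \<longlonglongrightarrow> 0"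
proof -
  have mb: "(\<lambda>x. \<bar>x\<bar> * indicator {x. real N < \<bar>x\<bar>} x) \<in> borel_measurable M" for N
    unfolding measurable_cong_sets[OF sb refl] by measurable
  have "(\<lambda>N::nat. integral\<^sup>L M (\<lambda>x. \<bar>x\<bar> * indicator {x. real N < \<bar>x\<bar>} x)) \<longlonglongrightarrow> integral\<^sup>L M (\<lambda>x. 0)"
  proof (rule integral_dominated_convergence[where w = "\<lambda>x. \<bar>x\<bar>"])
    show "(\<lambda>x. 0::real) \<in> borel_measurable M" by simp
    show "(\<lambda>x. \<bar>x\<bar> * indicator {x. real N < \<bar>x\<bar>} x) \<in> borel_measurable M" for N by (rule mb)
    show "integrable M (\<lambda>x. \<bar>x\<bar>)" by (rule mom)
    show "AE x in M. (\<lambda>N. \<bar>x\<bar> * indicator {x. real N < \<bar>x\<bar>} x) \<longlonglongrightarrow> 0"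
    proof (intro AE_I2)
      fix x :: real
      obtain N0 :: nat where "\<bar>x\<bar> \<le> real N0" using real_arch_simple by blast
      then have "\<forall>N\<ge>N0. \<bar>x\<bar> * indicator {x. real N < \<bar>x\<bar>} x = 0"
        by (auto simp: indicator_def)
      then show "(\<lambda>N. \<bar>x\<bar> * indicator {x. real N < \<bar>x\<bar>} x) \<longlonglongrightarrow> 0"
        by (intro tendsto_eventually) (auto simp: eventually_sequentially)
    qed
    show "AE x in M. norm (\<bar>x\<bar> * indicator {x. real N < \<bar>x\<bar>} x) \<le> \<bar>x\<bar>" for N
      by (intro AE_I2) (auto simp: indicator_def)
  qed
  then show ?thesis by simp
qed

lemma card_sum_ind:
  fixes n :: nat shows "real (card {i. i < n \<and> P i}) = (\<Sum>i<n. if P i then 1 else 0)"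
proof (induction n)
  case 0 then show ?case by simp
next
  case (Suc n)
  have "{i. i < Suc n \<and> P i} = {i. i < n \<and> P i} \<union> (if P n then {n} else {})" using less_Suc_eq by auto
  then show ?case using Suc by (auto simp: card_insert_if)
qed

lemma os_meas:
  fixes M :: "real measure"
  assumes sb: "sets M = sets borel" and m: "m < n"
  shows "(\<lambda>x. sort (map x [0..<n]) ! m) \<in> borel_measurable (PiM {..<n} (\<lambda>_. M))"
proof (subst borel_measurable_iff_le, intro allI)
  fix a
  have "{w \<in> space (PiM {..<n} (\<lambda>_. M)). sort (map w [0..<n]) ! m \<le> a}
      = {w \<in> space (PiM {..<n} (\<lambda>_. M)). real m < (\<Sum>i<n. indicator {..a} (w i))}"
  proof -
    have e: "{i. i < n \<and> w i \<le> a} = {..<n} \<inter> {i. w i \<le> a}" for w :: "nat \<Rightarrow> real" by auto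
    show ?thesis using os_le_iff[OF m] card_sum_ind[of n] by (auto simp: indicator_def e)
  qed
  also have "\<dots> \<in> sets (PiM {..<n} (\<lambda>_. M))"
  proof -
    have [measurable]: "{..a} \<in> sets M" using sb by simp
    show ?thesis by measurable
  qed
  finally show "{w \<in> space (PiM {..<n} (\<lambda>_. M)). sort (map w [0..<n]) ! m \<le> a} \<in> sets (PiM {..<n} (\<lambda>_. M))" .
qed

lemma integrable_coord:
  fixes M :: "real measure" and f :: "real \<Rightarrow> real"
  assumes M: "prob_space M" and i: "i \<in> I" and f: "f \<in> borel_measurable M" and fi: "integrable M f"
  shows "integrable (PiM I (\<lambda>_. M)) (\<lambda>x. f (x i))"
proof -
  have "integrable (distr (PiM I (\<lambda>_. M)) M (\<lambda>x. x i)) f"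
    using distr_PiM_component[of I "\<lambda>_. M" i] M i fi by simp
  then show ?thesis
    using integrable_distr_eq[OF measurable_component_singleton[OF i, of "\<lambda>_. M"] f] by simp
qed

locale OS =
  fixes M :: "real measure" and t q :: real
  assumes M: "prob_space M" and sb: "sets M = sets borel"
    and mom: "integrable M (\<lambda>x. \<bar>x\<bar>)"
    and t0: "0 < t" and t1: "t < 1"
    and below: "\<And>\<delta>. \<delta> > 0 \<Longrightarrow> measure M {..q-\<delta>} < t"
    and above: "\<And>\<delta>. \<delta> > 0 \<Longrightarrow> measure M {..q+\<delta>} > t"
begin

abbreviation P where "P n \<equiv> PiM {..<n} (\<lambda>_. M)"
definition mm :: "nat \<Rightarrow> nat" where "mm n = nat \<lfloor>(real n - 1) * t\<rfloor>"
abbreviation Z where "Z n x \<equiv> sort (map x [0..<n]) ! mm n"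
definition c :: real where "c = min (t/2) (1-t)"

lemma c_pos: "c > 0" using t0 t1 by (simp add: c_def)

lemma mm_props:
  assumes n: "n > 0"
  shows "real (mm n) \<le> (real n - 1) * t" "(real n - 1) * t < real (mm n) + 1" "mm n < n"
proof -
  have nn: "(real n - 1) * t \<ge> 0" using n t0 by simp
  then have f0: "\<lfloor>(real n - 1) * t\<rfloor> \<ge> 0" by simp
  then have e: "real (mm n) = of_int \<lfloor>(real n - 1) * t\<rfloor>" unfolding mm_def by simp
  show a: "real (mm n) \<le> (real n - 1) * t" unfolding e by (rule of_int_floor_le)
  show "(real n - 1) * t < real (mm n) + 1" unfolding e by linarith
  have "(real n - 1) * t \<le> real n - 1" using t1 n by (intro mult_left_le) auto
  then have "real (mm n) < real n" using a by linarith
  then show "mm n < n" by simp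
qed

lemma r_bound:
  assumes n: "n > 0"
  shows "c * real n \<le> real (min (mm n + 1) (n - mm n))"
proof -
  note mp = mm_props[OF n]
  have 1: "c * real n \<le> real (mm n + 1)"
  proof (cases "n = 1")
    case True
    then show ?thesis using t1 by (simp add: c_def min_def)
  next
    case False
    then have "real n \<ge> 2" using n by simp
    then have "t/2 * real n \<le> (real n - 1) * t" using t0 by (simp add: field_simps)
    moreover have "c * real n \<le> t/2 * real n"
    proof (intro mult_right_mono)
      show "c \<le> t/2" unfolding c_def by (rule min.cobounded1)
    qed simp
    ultimately show ?thesis using mp(2) by simp
  qed
  have 2: "c * real n \<le> real (n - mm n)"
  proof -
    have "c * real n \<le> (1 - t) * real n" by (intro mult_right_mono) (auto simp: c_def min.cobounded2)
    also have "\<dots> \<le> real n - real (mm n)" using mp(1) t0 by (simp add: algebra_simps)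
    finally show ?thesis using mp(3) by (simp add: of_nat_diff)
  qed
  show ?thesis using 1 2 by simp
qed

lemma Z_meas: "n > 0 \<Longrightarrow> Z n \<in> borel_measurable (P n)"
  by (rule os_meas[OF sb mm_props(3)])

lemma Z_bound:
  assumes n: "n > 0"
  shows "\<bar>Z n x\<bar> * (c * real n) \<le> (\<Sum>i<n. \<bar>x i\<bar>)"
proof -
  have "\<bar>Z n x\<bar> * (c * real n) \<le> \<bar>Z n x\<bar> * real (min (mm n + 1) (n - mm n))"
    by (intro mult_left_mono r_bound[OF n]) auto
  also have "\<dots> \<le> (\<Sum>i<n. \<bar>x i\<bar>)" by (rule os_bound[OF mm_props(3)[OF n]])
  finally show ?thesis .
qed

definition U :: "real \<Rightarrow> nat \<Rightarrow> (nat \<Rightarrow> real) set" where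
  "U \<delta> n = {x \<in> space (P n). (\<Sum>i<n. indicator {..q+\<delta>} (x i)) \<le> real (mm n)}"
definition L :: "real \<Rightarrow> nat \<Rightarrow> (nat \<Rightarrow> real) set" where
  "L \<delta> n = {x \<in> space (P n). (\<Sum>i<n. indicator {..q-\<delta>} (x i)) \<ge> real (mm n) + 1}"

lemma U_sets: "U \<delta> n \<in> sets (P n)"
proof -
  have [measurable]: "{..a} \<in> sets M" for a using sb by simp
  show ?thesis unfolding U_def by measurable
qed

lemma L_sets: "L \<delta> n \<in> sets (P n)"
proof -
  have [measurable]: "{..a} \<in> sets M" for a using sb by simp
  show ?thesis unfolding L_def by measurable
qed

lemma card_ind: fixes n :: nat and x :: "nat \<Rightarrow> real" shows "real (card {i. i < n \<and> x i \<le> a}) = (\<Sum>i<n. indicator {..a} (x i))"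
proof -
  have "(\<Sum>i<n. indicator {..a} (x i)) = (\<Sum>i<n. if x i \<le> a then 1 else (0::real))"
    by (intro sum.cong) (auto simp: indicator_def)
  then show ?thesis using card_sum_ind[of n "\<lambda>i. x i \<le> a"] by simp
qed

lemma outside:
  assumes n: "n > 0" and x: "x \<in> space (P n)" and u: "x \<notin> U \<delta> n" and l: "x \<notin> L \<delta> n"
  shows "\<bar>Z n x - q\<bar> \<le> \<delta>"
proof -
  note le = os_le_iff[OF mm_props(3)[OF n], of x]
  have "real (mm n) < real (card {i. i < n \<and> x i \<le> q+\<delta>})"
    using u x unfolding U_def card_ind by auto
  then have 1: "Z n x \<le> q + \<delta>" using le by simp
  have "real (card {i. i < n \<and> x i \<le> q-\<delta>}) < real (mm n) + 1"
    using l x unfolding L_def card_ind by auto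
  then have "\<not> mm n < card {i. i < n \<and> x i \<le> q-\<delta>}" by linarith
  then have 2: "\<not> Z n x \<le> q - \<delta>" using le by simp
  show ?thesis using 1 2 by linarith
qed

end

context OS begin

lemma PU:
  assumes \<delta>: "\<delta> > 0"
  shows "(\<lambda>n. measure (P n) (U \<delta> n)) \<longlonglongrightarrow> 0"
proof -
  define d where "d = measure M {..q+\<delta>} - t"
  have d: "d > 0" using above[OF \<delta>] by (simp add: d_def)
  have bnd: "measure (P n) (U \<delta> n) \<le> exp (- ((2 * d\<^sup>2) * real n))" if n: "n > 0" for n
  proof -
    interpret PP: prob_space "P n" by (intro prob_space_PiM M)
    have [measurable]: "{..a} \<in> sets M" for a using sb by simp
    let ?B = "{x \<in> space (P n). (\<Sum>i<n. indicator {..q+\<delta>} (x i)) \<le> real n * measure M {..q+\<delta>} - real n * d}"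
    have "U \<delta> n \<subseteq> ?B"
    proof
      fix x assume "x \<in> U \<delta> n"
      then have x: "x \<in> space (P n)" "(\<Sum>i<n. indicator {..q+\<delta>} (x i)) \<le> real (mm n)"
        unfolding U_def by auto
      have "real (mm n) \<le> (real n - 1) * t" by (rule mm_props(1)[OF n])
      also have "\<dots> \<le> real n * t" using t0 by (simp add: algebra_simps)
      also have "\<dots> = real n * measure M {..q+\<delta>} - real n * d" by (simp add: d_def algebra_simps)
      finally show "x \<in> ?B" using x by auto
    qed
    then have "measure (P n) (U \<delta> n) \<le> measure (P n) ?B"
      by (intro PP.finite_measure_mono) measurable
    also have "\<dots> \<le> exp (-2 * (real n * d)\<^sup>2 / real n)"
      by (rule hoeff_coords(1)[OF M sb n]) (use d in simp)
    also have "-2 * (real n * d)\<^sup>2 / real n = - ((2 * d\<^sup>2) * real n)"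
      using n by (simp add: power2_eq_square field_simps)
    finally show ?thesis .
  qed
  show ?thesis
  proof (rule tendsto_sandwich[of "\<lambda>n. 0" _ sequentially "\<lambda>n. exp (- ((2 * d\<^sup>2) * real n))"])
    show "\<forall>\<^sub>F n in sequentially. 0 \<le> measure (P n) (U \<delta> n)" by simp
    show "\<forall>\<^sub>F n in sequentially. measure (P n) (U \<delta> n) \<le> exp (- ((2 * d\<^sup>2) * real n))"
      by (rule eventually_sequentiallyI[of 1]) (rule bnd, simp)
    show "(\<lambda>n. 0::real) \<longlonglongrightarrow> 0" by simp
    show "(\<lambda>n. exp (- ((2 * d\<^sup>2) * real n))) \<longlonglongrightarrow> 0" using d by (intro exp_lim) simp
  qed
qed

lemma PL:
  assumes \<delta>: "\<delta> > 0"
  shows "(\<lambda>n. measure (P n) (L \<delta> n)) \<longlonglongrightarrow> 0"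
proof -
  define d where "d = t - measure M {..q-\<delta>}"
  have d: "d > 0" using below[OF \<delta>] by (simp add: d_def)
  have bnd: "measure (P n) (L \<delta> n) \<le> exp (- ((d\<^sup>2 / 2) * real n))" if n: "n > 0" and nd: "real n * d \<ge> 2 * t" for n
  proof -
    interpret PP: prob_space "P n" by (intro prob_space_PiM M)
    have [measurable]: "{..a} \<in> sets M" for a using sb by simp
    let ?B = "{x \<in> space (P n). (\<Sum>i<n. indicator {..q-\<delta>} (x i)) \<ge> real n * measure M {..q-\<delta>} + real n * d / 2}"
    have "L \<delta> n \<subseteq> ?B"
    proof
      fix x assume "x \<in> L \<delta> n"
      then have x: "x \<in> space (P n)" "(\<Sum>i<n. indicator {..q-\<delta>} (x i)) \<ge> real (mm n) + 1"
        unfolding L_def by auto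
      have "real n * measure M {..q-\<delta>} + real n * d / 2 \<le> (real n - 1) * t"
      proof -
        have e: "real n * measure M {..q-\<delta>} = real n * t - real n * d" by (simp add: d_def algebra_simps)
        have e2: "(real n - 1) * t = real n * t - t" by (simp add: algebra_simps)
        show ?thesis using nd e e2 by linarith
      qed
      also have "\<dots> \<le> real (mm n) + 1" using mm_props(2)[OF n] by simp
      finally show "x \<in> ?B" using x by auto
    qed
    then have "measure (P n) (L \<delta> n) \<le> measure (P n) ?B"
      by (intro PP.finite_measure_mono) measurable
    also have "\<dots> \<le> exp (-2 * (real n * d / 2)\<^sup>2 / real n)"
      by (rule hoeff_coords(2)[OF M sb n]) (use d in simp)
    also have "-2 * (real n * d / 2)\<^sup>2 / real n = - ((d\<^sup>2 / 2) * real n)"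
      using n by (simp add: power2_eq_square field_simps)
    finally show ?thesis .
  qed
  obtain N0 :: nat where N0: "2 * t / d \<le> real N0" using real_arch_simple by blast
  have ev: "\<forall>\<^sub>F n in sequentially. measure (P n) (L \<delta> n) \<le> exp (- ((d\<^sup>2 / 2) * real n))"
  proof (rule eventually_sequentiallyI[of "Suc N0"])
    fix n assume "Suc N0 \<le> n"
    then have n: "n > 0" and "real N0 \<le> real n" by auto
    then have "2 * t / d \<le> real n" using N0 by linarith
    then have "real n * d \<ge> 2 * t" using d by (simp add: field_simps)
    then show "measure (P n) (L \<delta> n) \<le> exp (- ((d\<^sup>2 / 2) * real n))" by (rule bnd[OF n])
  qed
  show ?thesis
  proof (rule tendsto_sandwich[of "\<lambda>n. 0" _ sequentially "\<lambda>n. exp (- ((d\<^sup>2 / 2) * real n))"])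
    show "\<forall>\<^sub>F n in sequentially. 0 \<le> measure (P n) (L \<delta> n)" by simp
    show "\<forall>\<^sub>F n in sequentially. measure (P n) (L \<delta> n) \<le> exp (- ((d\<^sup>2 / 2) * real n))" by (rule ev)
    show "(\<lambda>n. 0::real) \<longlonglongrightarrow> 0" by simp
    show "(\<lambda>n. exp (- ((d\<^sup>2 / 2) * real n))) \<longlonglongrightarrow> 0" using d by (intro exp_lim) simp
  qed
qed

end

context OS begin

definition g :: "nat \<Rightarrow> real \<Rightarrow> real" where
  "g N y = \<bar>y\<bar> * indicator {y. real N < \<bar>y\<bar>} y"

definition T :: "nat \<Rightarrow> real" where
  "T N = integral\<^sup>L M (g N)"

lemma g_meas: "g N \<in> borel_measurable M"
  unfolding measurable_cong_sets[OF sb refl] g_def by measurable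

lemma g_int: "integrable M (g N)"
  by (rule Bochner_Integration.integrable_bound[OF mom g_meas]) (auto simp: g_def indicator_def)

lemma T_lim: "T \<longlonglongrightarrow> 0"
  using tail_lim[OF mom sb] unfolding T_def g_def by simp

lemma main_bound:
  assumes n: "n > 0" and \<delta>: "\<delta> > 0"
  shows "integrable (P n) (\<lambda>x. \<bar>Z n x - q\<bar>)"
    and "(\<integral>x. \<bar>Z n x - q\<bar> \<partial>P n) \<le> \<delta> + (\<bar>q\<bar> + real N / c) * (measure (P n) (U \<delta> n) + measure (P n) (L \<delta> n)) + T N / c"
proof -
  interpret PP: prob_space "P n" by (intro prob_space_PiM M)
  define A where "A = U \<delta> n \<union> L \<delta> n"
  have A: "A \<in> sets (P n)" unfolding A_def using U_sets L_sets by auto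
  define B where "B x = \<delta> + (\<bar>q\<bar> + real N / c) * indicator A x + (1 / (c * real n)) * (\<Sum>i<n. g N (x i))" for x
  have cp: "c > 0" by (rule c_pos)
  have g0: "g N y \<ge> 0" for y by (simp add: g_def)
  have gb: "\<bar>y\<bar> \<le> real N + g N y" for y by (auto simp: g_def indicator_def)
  have pw: "\<bar>Z n x - q\<bar> \<le> B x" if x: "x \<in> space (P n)" for x
  proof (cases "x \<in> A")
    case False
    then have "\<bar>Z n x - q\<bar> \<le> \<delta>" using outside[OF n x] by (auto simp: A_def)
    moreover have "0 \<le> (1 / (c * real n)) * (\<Sum>i<n. g N (x i))"
      using cp n g0 by (intro mult_nonneg_nonneg sum_nonneg) auto
    moreover have "0 \<le> (\<bar>q\<bar> + real N / c) * indicator A x" using cp by simp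
    ultimately show ?thesis unfolding B_def by linarith
  next
    case True
    have "\<bar>Z n x\<bar> * (c * real n) \<le> (\<Sum>i<n. \<bar>x i\<bar>)" by (rule Z_bound[OF n])
    also have "\<dots> \<le> (\<Sum>i<n. real N + g N (x i))" by (intro sum_mono gb)
    also have "\<dots> = real n * real N + (\<Sum>i<n. g N (x i))" by (simp add: sum.distrib)
    finally have "\<bar>Z n x\<bar> \<le> (real n * real N + (\<Sum>i<n. g N (x i))) / (c * real n)"
      using cp n by (simp add: field_simps)
    also have "\<dots> = real N / c + (1 / (c * real n)) * (\<Sum>i<n. g N (x i))"
      using cp n by (simp add: field_simps)
    finally have "\<bar>Z n x\<bar> \<le> real N / c + (1 / (c * real n)) * (\<Sum>i<n. g N (x i))" .
    moreover have "\<bar>Z n x - q\<bar> \<le> \<bar>Z n x\<bar> + \<bar>q\<bar>" by (rule abs_triangle_ineq4)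
    moreover have "B x = \<delta> + (\<bar>q\<bar> + real N / c) + (1 / (c * real n)) * (\<Sum>i<n. g N (x i))"
      using True by (simp add: B_def)
    ultimately show ?thesis using \<delta> by linarith
  qed
  have gi: "integrable (P n) (\<lambda>x. g N (x i))" if "i < n" for i
    by (rule integrable_coord[OF M _ g_meas g_int]) (use that in simp)
  have ii: "integrable (P n) (indicator A :: _ \<Rightarrow> real)"
    using A by (intro integrable_real_indicator) (auto simp: PP.emeasure_finite less_top[symmetric])
  have i1: "integrable (P n) (\<lambda>x. \<delta> + (\<bar>q\<bar> + real N / c) * indicator A x)"
    using ii by (intro Bochner_Integration.integrable_add Bochner_Integration.integrable_mult_right) simp_all
  have i2: "integrable (P n) (\<lambda>x. \<Sum>i<n. g N (x i))"
    using gi by (intro Bochner_Integration.integrable_sum) auto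
  have i3: "integrable (P n) (\<lambda>x. 1 / (c * real n) * (\<Sum>i<n. g N (x i)))"
    using i2 by (intro Bochner_Integration.integrable_mult_right) simp
  have Bi: "integrable (P n) B"
    unfolding B_def using i1 i3 by (rule Bochner_Integration.integrable_add)
  have Zm: "(\<lambda>x. \<bar>Z n x - q\<bar>) \<in> borel_measurable (P n)"
  proof -
    have "(\<lambda>y. \<bar>y - q\<bar>) \<in> borel_measurable borel" by (intro borel_measurable_continuous_onI continuous_intros)
    then show ?thesis by (rule measurable_compose[OF Z_meas[OF n]])
  qed
  show Zi: "integrable (P n) (\<lambda>x. \<bar>Z n x - q\<bar>)"
  proof (rule Bochner_Integration.integrable_bound[OF Bi Zm])
    show "AE x in P n. norm \<bar>Z n x - q\<bar> \<le> norm (B x)"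
      using pw by (intro AE_I2) (auto intro: order_trans[OF _ abs_ge_self])
  qed
  have "(\<integral>x. \<bar>Z n x - q\<bar> \<partial>P n) \<le> integral\<^sup>L (P n) B"
    using pw by (intro integral_mono[OF Zi Bi]) auto
  also have "integral\<^sup>L (P n) B = \<delta> + (\<bar>q\<bar> + real N / c) * measure (P n) A + (1 / (c * real n)) * (\<Sum>i<n. T N)"
  proof -
    have "integral\<^sup>L (P n) B = \<delta> + (\<bar>q\<bar> + real N / c) * integral\<^sup>L (P n) (indicator A) + (1 / (c * real n)) * (\<Sum>i<n. integral\<^sup>L (P n) (\<lambda>x. g N (x i)))"
    proof -
      have "integral\<^sup>L (P n) B = integral\<^sup>L (P n) (\<lambda>x. \<delta> + (\<bar>q\<bar> + real N / c) * indicator A x)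
           + integral\<^sup>L (P n) (\<lambda>x. 1 / (c * real n) * (\<Sum>i<n. g N (x i)))"
        unfolding B_def by (rule Bochner_Integration.integral_add[OF i1 i3])
      also have "integral\<^sup>L (P n) (\<lambda>x. \<delta> + (\<bar>q\<bar> + real N / c) * indicator A x)
          = integral\<^sup>L (P n) (\<lambda>x. \<delta>) + integral\<^sup>L (P n) (\<lambda>x. (\<bar>q\<bar> + real N / c) * indicator A x)"
        by (rule Bochner_Integration.integral_add) (use ii in simp_all)
      also have "integral\<^sup>L (P n) (\<lambda>x. \<delta>) = \<delta>" by (simp add: PP.prob_space)
      also have "integral\<^sup>L (P n) (\<lambda>x. (\<bar>q\<bar> + real N / c) * indicator A x) = (\<bar>q\<bar> + real N / c) * integral\<^sup>L (P n) (indicator A)"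
        by (rule integral_mult_right_zero)
      also have "integral\<^sup>L (P n) (\<lambda>x. 1 / (c * real n) * (\<Sum>i<n. g N (x i))) = 1 / (c * real n) * integral\<^sup>L (P n) (\<lambda>x. \<Sum>i<n. g N (x i))"
        by (rule integral_mult_right_zero)
      also have "integral\<^sup>L (P n) (\<lambda>x. \<Sum>i<n. g N (x i)) = (\<Sum>i<n. integral\<^sup>L (P n) (\<lambda>x. g N (x i)))"
        by (rule Bochner_Integration.integral_sum) (use gi in simp)
      finally show ?thesis .
    qed
    also have "(\<Sum>i<n. integral\<^sup>L (P n) (\<lambda>x. g N (x i))) = (\<Sum>i<n. T N)"
      unfolding T_def by (intro sum.cong refl expect_coord[OF M _ g_meas]) simp
    finally show ?thesis using A by (simp add: Int_absorb2 sets.sets_into_space)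
  qed
  also have "\<dots> = \<delta> + (\<bar>q\<bar> + real N / c) * measure (P n) A + T N / c"
    using n cp by simp
  also have "measure (P n) A \<le> measure (P n) (U \<delta> n) + measure (P n) (L \<delta> n)"
    unfolding A_def by (intro measure_Un_le U_sets L_sets)
  finally show "(\<integral>x. \<bar>Z n x - q\<bar> \<partial>P n) \<le> \<delta> + (\<bar>q\<bar> + real N / c) * (measure (P n) (U \<delta> n) + measure (P n) (L \<delta> n)) + T N / c"
    using cp by (simp add: mult_left_mono)
qed

end

context OS begin

lemma Z_lim: "(\<lambda>n. \<integral>x. \<bar>Z n x - q\<bar> \<partial>P n) \<longlonglongrightarrow> 0"
proof (rule LIMSEQ_I)
  fix e :: real assume e: "0 < e"
  have cp: "c > 0" by (rule c_pos)
  define \<delta> where "\<delta> = e / 4"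
  have \<delta>: "\<delta> > 0" using e by (simp add: \<delta>_def)
  obtain N0 where N0: "\<forall>N\<ge>N0. norm (T N - 0) < c * e / 4"
    using LIMSEQ_D[OF T_lim, of "c * e / 4"] cp e by auto
  then have "T N0 < c * e / 4" by auto
  then have TN: "T N0 / c < e / 4" using cp by (simp add: field_simps)
  define K where "K = \<bar>q\<bar> + real N0 / c"
  have K: "K \<ge> 0" using cp by (simp add: K_def)
  have s: "(\<lambda>n. measure (P n) (U \<delta> n) + measure (P n) (L \<delta> n)) \<longlonglongrightarrow> 0"
    using tendsto_add[OF PU[OF \<delta>] PL[OF \<delta>]] by simp
  obtain n1 where n1: "\<forall>n\<ge>n1. norm (measure (P n) (U \<delta> n) + measure (P n) (L \<delta> n) - 0) < e / (4 * (K + 1))"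
    using LIMSEQ_D[OF s, of "e / (4 * (K + 1))"] e K by auto
  show "\<exists>no. \<forall>n\<ge>no. norm ((\<integral>x. \<bar>Z n x - q\<bar> \<partial>P n) - 0) < e"
  proof (intro exI[of _ "max n1 1"] allI impI)
    fix n assume n: "max n1 1 \<le> n"
    then have n0: "n > 0" by simp
    define S where "S = measure (P n) (U \<delta> n) + measure (P n) (L \<delta> n)"
    have S0: "S \<ge> 0" by (simp add: S_def)
    have "S < e / (4 * (K + 1))" using n1 n S0 by (auto simp: S_def)
    then have "S * (K + 1) < e / 4" using K by (simp add: field_simps)
    moreover have "K * S \<le> S * (K + 1)" using S0 by (simp add: algebra_simps)
    ultimately have KS: "K * S < e / 4" by linarith
    have b: "(\<integral>x. \<bar>Z n x - q\<bar> \<partial>P n) \<le> \<delta> + K * S + T N0 / c"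
      using main_bound(2)[OF n0 \<delta>, of N0] by (simp add: K_def S_def)
    have nn: "(\<integral>x. \<bar>Z n x - q\<bar> \<partial>P n) \<ge> 0" by simp
    show "norm ((\<integral>x. \<bar>Z n x - q\<bar> \<partial>P n) - 0) < e"
    proof -
      have "(\<integral>x. \<bar>Z n x - q\<bar> \<partial>P n) < e" using b KS TN \<delta>_def e by linarith
      then show ?thesis using nn by simp
    qed
  qed
qed

end

locale MU =
  fixes \<mu> :: "real measure" and \<rho> :: "real \<Rightarrow> real" and I :: "real set"
  assumes prob: "prob_space \<mu>"
    and dens_meas: "\<rho> \<in> borel_measurable borel"
    and dens_nonneg: "\<And>x. \<rho> x \<ge> 0"
    and dens: "\<mu> = density lborel (\<lambda>x. ennreal (\<rho> x))"
    and I_interval: "is_interval I"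
    and dens_pos: "\<And>x. x \<in> interior I \<Longrightarrow> \<rho> x > 0"
    and dens_zero: "\<And>x. x \<notin> I \<Longrightarrow> \<rho> x = 0"
    and first_moment: "integrable \<mu> (\<lambda>x. \<bar>x\<bar>)"
begin

lemma sb: "sets \<mu> = sets borel" by (simp add: dens)

lemma space_mu[simp]: "space \<mu> = UNIV" using sets_eq_imp_space_eq[OF sb] by simp

sublocale RD: real_distribution \<mu>
  by (rule real_distribution.intro[OF prob]) (unfold_locales, rule sb)

lemma cdf_eq: "Defs.cdf \<mu> x = Distribution_Functions.cdf \<mu> x"
  by (simp add: Defs.cdf_def cdf_def2)

abbreviation F where "F \<equiv> Defs.cdf \<mu>"

lemma F_mono: "x \<le> y \<Longrightarrow> F x \<le> F y"
  unfolding cdf_eq by (rule RD.cdf_nondecreasing)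

lemma F_bot: "(F \<longlongrightarrow> 0) at_bot"
proof -
  have "F = Distribution_Functions.cdf \<mu>" by (simp add: fun_eq_iff cdf_eq)
  then show ?thesis using RD.cdf_lim_at_bot by simp
qed

lemma F_top: "(F \<longlongrightarrow> 1) at_top"
proof -
  have "F = Distribution_Functions.cdf \<mu>" by (simp add: fun_eq_iff cdf_eq)
  then show ?thesis using RD.cdf_lim_at_top_prob by simp
qed

lemma F_rc: "(F \<longlongrightarrow> F a) (at_right a)"
proof -
  have "F = Distribution_Functions.cdf \<mu>" by (simp add: fun_eq_iff cdf_eq)
  then show ?thesis using RD.cdf_is_right_cont[of a] by (simp add: continuous_within)
qed

lemma F_diff: "x \<le> y \<Longrightarrow> F y - F x = measure \<mu> {x<..y}"
  using RD.cdf_diff_eq[of x y] by (cases "x = y") (auto simp: cdf_eq)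

lemma F_def': "F x = measure \<mu> {..x}" by (simp add: Defs.cdf_def)

lemma emeasure_mu: "A \<in> sets borel \<Longrightarrow> emeasure \<mu> A = (\<integral>\<^sup>+ x. ennreal (\<rho> x) * indicator A x \<partial>lborel)"
  unfolding dens using dens_meas by (subst emeasure_density) auto

lemma pos_mass:
  assumes A: "A \<in> sets borel" and pos: "measure \<mu> A > 0"
  shows "\<exists>x\<in>A. x \<in> I"
proof (rule ccontr)
  assume "\<not> (\<exists>x\<in>A. x \<in> I)"
  then have z: "(\<lambda>x. ennreal (\<rho> x) * indicator A x) = (\<lambda>x. 0)"
    using dens_zero by (auto simp: indicator_def fun_eq_iff)
  have "emeasure \<mu> A = 0" using emeasure_mu[OF A, unfolded z] by simp
  then show False using pos by (simp add: RD.emeasure_eq_measure)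
qed

lemma interval_pos:
  assumes ab: "a < b" and sub: "{a<..<b} \<subseteq> interior I"
  shows "measure \<mu> {a<..<b} > 0"
proof (rule ccontr)
  assume "\<not> measure \<mu> {a<..<b} > 0"
  then have "emeasure \<mu> {a<..<b} = 0"
    by (simp add: RD.emeasure_eq_measure measure_nonneg antisym)
  then have "(\<integral>\<^sup>+ x. ennreal (\<rho> x) * indicator {a<..<b} x \<partial>lborel) = 0"
    using emeasure_mu[of "{a<..<b}"] by simp
  then have "AE x in lborel. ennreal (\<rho> x) * indicator {a<..<b} x = 0"
    using dens_meas by (subst (asm) nn_integral_0_iff_AE) auto
  then have "AE x in lborel. x \<notin> {a<..<b}"
  proof (rule AE_mp, intro AE_I2 impI)
    fix x assume h: "ennreal (\<rho> x) * indicator {a<..<b} x = 0"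
    show "x \<notin> {a<..<b}"
    proof
      assume x: "x \<in> {a<..<b}"
      then have "\<rho> x > 0" using sub dens_pos by auto
      then show False using h x by (simp add: indicator_def)
    qed
  qed
  then have "emeasure lborel {a<..<b} = 0"
    by (subst (asm) AE_iff_measurable[of "{a<..<b}"]) auto
  then show False using ab by simp
qed

context
  fixes t :: real assumes t0: "0 < t" and t1: "t < 1"
begin

definition S where "S = {x. F x \<ge> t}"

lemma S_ne: "S \<noteq> {}"
proof -
  have "eventually (\<lambda>x. F x > t) at_top"
    using F_top t1 by (rule order_tendstoD)
  then obtain x where "F x > t" by (auto simp: eventually_at_top_linorder)
  then have "x \<in> S" by (simp add: S_def)
  then show ?thesis by auto
qed

lemma S_bdd: "bdd_below S"
proof -
  have "eventually (\<lambda>x. F x < t) at_bot"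
    using F_bot t0 by (rule order_tendstoD)
  then obtain b where b: "\<And>x. x \<le> b \<Longrightarrow> F x < t" by (auto simp: eventually_at_bot_linorder)
  have "b \<le> x" if "x \<in> S" for x
    using b[of x] that by (force simp: S_def)
  then show ?thesis by (auto simp: bdd_below_def)
qed

lemma q_eq: "cdf_inv \<mu> t = Inf S"
  by (simp add: cdf_inv_def S_def)

lemma q_below: "x < cdf_inv \<mu> t \<Longrightarrow> F x < t"
proof (rule ccontr)
  assume x: "x < cdf_inv \<mu> t" and "\<not> F x < t"
  then have "x \<in> S" by (simp add: S_def)
  then have "Inf S \<le> x" by (intro cInf_lower S_bdd)
  then show False using x q_eq by simp
qed

lemma q_ge: "F (cdf_inv \<mu> t) \<ge> t"
proof (rule tendsto_lowerbound[OF F_rc])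
  show "eventually (\<lambda>x. t \<le> F x) (at_right (cdf_inv \<mu> t))"
  proof (rule eventually_at_rightI[of "cdf_inv \<mu> t" "cdf_inv \<mu> t + 1"])
    fix x assume "x \<in> {cdf_inv \<mu> t<..<cdf_inv \<mu> t + 1}"
    then have "Inf S < x" using q_eq by simp
    then obtain s where s: "s \<in> S" "s < x" using cInf_less_iff[OF S_ne S_bdd] by auto
    then show "t \<le> F x" using F_mono[of s x] by (auto simp: S_def)
  qed simp
qed simp

lemma q_above:
  assumes d: "\<delta> > 0"
  shows "F (cdf_inv \<mu> t + \<delta>) > t"
proof (rule ccontr)
  define q where "q = cdf_inv \<mu> t"
  assume "\<not> F (cdf_inv \<mu> t + \<delta>) > t"
  then have h: "F (q + \<delta>) \<le> t" by (simp add: q_def)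
  have "measure \<mu> {..q} > 0" using q_ge t0 by (simp add: F_def' q_def)
  then obtain a where a: "a \<le> q" "a \<in> I" using pos_mass[of "{..q}"] by auto
  have e: "{q+\<delta><..} = space \<mu> - {..q+\<delta>}" by auto
  have "measure \<mu> {q+\<delta><..} = 1 - F (q + \<delta>)"
    unfolding e F_def' by (rule RD.prob_compl) (simp add: sb)
  then have "measure \<mu> {q+\<delta><..} > 0" using h t1 by simp
  then obtain b where b: "q + \<delta> < b" "b \<in> I" using pos_mass[of "{q+\<delta><..}"] by auto
  have "{q<..<q+\<delta>} \<subseteq> I"
  proof
    fix x assume "x \<in> {q<..<q+\<delta>}"
    then have "a \<le> x" "x \<le> b" using a b by auto
    then show "x \<in> I" by (rule mem_is_interval_1_I[OF I_interval a(2) b(2)])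
  qed
  then have "{q<..<q+\<delta>} \<subseteq> interior I" by (intro interior_maximal) auto
  then have p: "measure \<mu> {q<..<q+\<delta>} > 0" using d by (intro interval_pos) auto
  have "measure \<mu> {q<..<q+\<delta>} \<le> measure \<mu> {q<..q+\<delta>}"
    by (intro RD.finite_measure_mono) auto
  also have "\<dots> = F (q + \<delta>) - F q" using F_diff[of q "q+\<delta>"] d by simp
  also have "\<dots> \<le> 0" using h q_ge by (simp add: q_def)
  finally show False using p by simp
qed

lemma OS_inst: "OS \<mu> t (cdf_inv \<mu> t)"
proof (rule OS.intro)
  show "prob_space \<mu>" by (rule prob)
  show "sets \<mu> = sets borel" by (rule sb)
  show "integrable \<mu> abs" using first_moment by simp
  show "0 < t" "t < 1" by (rule t0, rule t1)
  show "measure \<mu> {..cdf_inv \<mu> t - \<delta>} < t" if "\<delta> > 0" for \<delta>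
    using q_below[of "cdf_inv \<mu> t - \<delta>"] that by (simp add: F_def')
  show "measure \<mu> {..cdf_inv \<mu> t + \<delta>} > t" if "\<delta> > 0" for \<delta>
    using q_above[OF that] by (simp add: F_def')
qed

end

lemma q_mono:
  assumes "0 < t" "t \<le> t'" "t' < 1"
  shows "cdf_inv \<mu> t \<le> cdf_inv \<mu> t'"
proof -
  have "F (cdf_inv \<mu> t') \<ge> t" using q_ge[of t'] assms by simp
  then have "cdf_inv \<mu> t' \<in> S t" using assms by (simp add: S_def)
  then show ?thesis using assms by (simp add: q_eq cInf_lower S_bdd)
qed

end

locale MUK = MU +
  fixes k :: nat and v :: "nat \<Rightarrow> real"
  assumes k_pos: "k \<ge> 1"
    and v_range: "\<And>j. j < k \<Longrightarrow> 0 < v j \<and> v j < 1"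
    and v_sorted: "\<And>i j. i \<le> j \<Longrightarrow> j < k \<Longrightarrow> v i \<le> v j"
begin

definition qq :: "nat \<Rightarrow> real" where "qq j = cdf_inv \<mu> (v j)"
definition z :: "nat \<Rightarrow> real" where "z i = (qq (i - 1) + qq i) / 2"
definition C :: "nat \<Rightarrow> real \<Rightarrow> bool" where
  "C i x \<longleftrightarrow> (i = 0 \<or> z i < x) \<and> (k \<le> Suc i \<or> x \<le> z (Suc i))"
definition D :: "real \<Rightarrow> real" where "D x = Min ((\<lambda>j. \<bar>x - qq j\<bar>) ` {..<k})"

lemma qq_mono: "i \<le> j \<Longrightarrow> j < k \<Longrightarrow> qq i \<le> qq j"
  unfolding qq_def using v_range v_sorted by (intro q_mono) (auto intro: le_less_trans)

lemma z_mono: assumes "1 \<le> i" "i \<le> j" "j < k" shows "z i \<le> z j"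
proof -
  have "qq (i - 1) \<le> qq (j - 1)" using assms by (intro qq_mono) auto
  moreover have "qq i \<le> qq j" using assms by (intro qq_mono) auto
  ultimately show ?thesis unfolding z_def by simp
qed

lemma kne: "{..<k} \<noteq> {}"
proof -
  have "0 \<in> {..<k}" using k_pos by simp
  then show ?thesis by blast
qed

lemma cell_exists: "\<exists>i<k. C i x"
proof -
  define G where "G = {i. i < k \<and> (i = 0 \<or> z i < x)}"
  have fin: "finite G" by (simp add: G_def)
  have ne: "0 \<in> G" using k_pos by (simp add: G_def)
  define i where "i = Max G"
  have iG: "i \<in> G" unfolding i_def using fin ne by (intro Max_in) auto
  have "k \<le> Suc i \<or> x \<le> z (Suc i)"
  proof (rule ccontr)
    assume "\<not> (k \<le> Suc i \<or> x \<le> z (Suc i))"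
    then have "Suc i \<in> G" by (auto simp: G_def)
    then have "Suc i \<le> i" unfolding i_def using fin by (intro Max_ge)
    then show False by simp
  qed
  then show ?thesis using iG by (auto simp: G_def C_def)
qed

lemma cell_unique:
  assumes "i < k" "j < k" "C i x" "C j x" shows "i = j"
proof (rule ccontr)
  assume "i \<noteq> j"
  then consider "i < j" | "j < i" by linarith
  then show False
  proof cases
    case 1
    then have "x \<le> z (Suc i)" "z j < x" using assms by (auto simp: C_def)
    moreover have "z (Suc i) \<le> z j" using 1 assms by (intro z_mono) auto
    ultimately show False by simp
  next
    case 2
    then have "x \<le> z (Suc j)" "z i < x" using assms by (auto simp: C_def)
    moreover have "z (Suc j) \<le> z i" using 2 assms by (intro z_mono) auto
    ultimately show False by simp
  qed
qed

lemma cell_opt: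
  assumes i: "i < k" and c: "C i x" and j: "j < k"
  shows "\<bar>x - qq i\<bar> \<le> \<bar>x - qq j\<bar>"
proof -
  consider "j = i" | "i < j" | "j < i" by linarith
  then show ?thesis
  proof cases
    case 1 then show ?thesis by simp
  next
    case 2
    then have "x \<le> z (Suc i)" using c j by (auto simp: C_def)
    moreover have "qq (Suc i) \<le> qq j" using 2 j by (intro qq_mono) auto
    moreover have "qq i \<le> qq (Suc i)" using 2 j by (intro qq_mono) auto
    ultimately show ?thesis by (simp add: z_def)
  next
    case 3
    then have "z i < x" using c by (auto simp: C_def)
    moreover have "qq j \<le> qq (i - 1)" using 3 i by (intro qq_mono) auto
    moreover have "qq (i - 1) \<le> qq i" using 3 i by (intro qq_mono) auto
    ultimately show ?thesis by (simp add: z_def)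
  qed
qed

lemma D_eq: "i < k \<Longrightarrow> C i x \<Longrightarrow> D x = \<bar>x - qq i\<bar>"
  unfolding D_def using cell_opt k_pos
  by (intro antisym Min_le Min.boundedI) auto

lemma D_le: "j < k \<Longrightarrow> D x \<le> \<bar>x - qq j\<bar>"
  unfolding D_def by (intro Min_le) auto

lemma D_nonneg: "D x \<ge> 0"
  unfolding D_def using kne by (intro Min.boundedI) auto

lemma D_meas: "D \<in> borel_measurable borel"
  unfolding D_def by measurable

lemma C_sets: "{x. C i x} \<in> sets borel"
  unfolding C_def by measurable

definition TT :: "real \<Rightarrow> real" where "TT x = (\<Sum>i<k. qq i * indicator {x. C i x} x)"

lemma TT_eq: "i < k \<Longrightarrow> C i x \<Longrightarrow> TT x = qq i"
proof -
  assume i: "i < k" and c: "C i x"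
  have "TT x = (\<Sum>j\<in>{i}. qq j * indicator {x. C j x} x)"
    unfolding TT_def
    by (rule sum.mono_neutral_right) (use i c cell_unique in \<open>auto simp: indicator_def\<close>)
  then show ?thesis using c by simp
qed

lemma TT_meas: "TT \<in> borel_measurable borel"
  unfolding TT_def using C_sets by measurable

lemma TT_D: "\<bar>x - TT x\<bar> = D x"
  using cell_exists[of x] TT_eq D_eq by auto

end

context MUK begin

lemma zF_eq: "0 < i \<Longrightarrow> i < k \<Longrightarrow> zF \<mu> k v i = F (z i)"
  by (simp add: zF_def z_def qq_def)

lemma prob_Ioi: "measure \<mu> {a<..} = 1 - F a"
proof -
  have e: "{a<..} = space \<mu> - {..a}" by auto
  show ?thesis unfolding e F_def' by (rule RD.prob_compl) (simp add: sb)
qed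

lemma cell_measure:
  assumes i: "i < k"
  shows "measure \<mu> {x. C i x} = zF \<mu> k v (Suc i) - zF \<mu> k v i"
proof (cases "i = 0")
  case True
  show ?thesis
  proof (cases "k \<le> Suc i")
    case True
    have "{x. C i x} = space \<mu>" using True \<open>i = 0\<close> by (auto simp: C_def)
    then show ?thesis using True \<open>i = 0\<close> RD.prob_space by (simp add: zF_def)
  next
    case False
    have "{x. C i x} = {..z (Suc i)}" using False \<open>i = 0\<close> by (auto simp: C_def)
    then show ?thesis using False \<open>i = 0\<close> zF_eq[of "Suc i"] by (simp add: zF_def F_def')
  qed
next
  case False
  show ?thesis
  proof (cases "k \<le> Suc i")
    case True
    have "{x. C i x} = {z i<..}" using True False by (auto simp: C_def)
    then show ?thesis using True False zF_eq[of i] i by (simp add: zF_def prob_Ioi)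
  next
    case F2: False
    have "{x. C i x} = {z i<..z (Suc i)}" using F2 False by (auto simp: C_def)
    moreover have "z i \<le> z (Suc i)" using F2 False by (intro z_mono) auto
    ultimately show ?thesis using F2 False zF_eq[of i] zF_eq[of "Suc i"] i
      by (simp add: F_diff)
  qed
qed

lemma TT_meas_mu: "TT \<in> measurable \<mu> borel"
  using TT_meas unfolding measurable_cong_sets[OF sb refl] .

lemma distr_TT: "distr \<mu> borel TT = nuQ \<mu> k v"
proof (rule measure_eqI)
  show "sets (distr \<mu> borel TT) = sets (nuQ \<mu> k v)" by (simp add: nuQ_def)
  fix A assume "A \<in> sets (distr \<mu> borel TT)"
  then have A: "A \<in> sets borel" by simp
  define J where "J = {i. i < k \<and> qq i \<in> A}"
  have finJ: "finite J" by (simp add: J_def)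
  have pre: "TT -` A \<inter> space \<mu> = (\<Union>i\<in>J. {x. C i x})"
  proof (intro equalityI subsetI)
    fix x assume x: "x \<in> TT -` A \<inter> space \<mu>"
    obtain i where "i < k" "C i x" using cell_exists by blast
    then show "x \<in> (\<Union>i\<in>J. {x. C i x})" using x TT_eq by (auto simp: J_def)
  next
    fix x assume "x \<in> (\<Union>i\<in>J. {x. C i x})"
    then obtain i where "i \<in> J" "C i x" by auto
    then show "x \<in> TT -` A \<inter> space \<mu>" using TT_eq by (auto simp: J_def)
  qed
  have "emeasure (distr \<mu> borel TT) A = emeasure \<mu> (TT -` A \<inter> space \<mu>)"
    by (rule emeasure_distr[OF TT_meas_mu A])
  also have "\<dots> = (\<Sum>i\<in>J. emeasure \<mu> {x. C i x})"
    unfolding pre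
  proof (rule sum_emeasure[symmetric])
    show "(\<lambda>i. {x. C i x}) ` J \<subseteq> sets \<mu>" using C_sets sb by auto
    show "disjoint_family_on (\<lambda>i. {x. C i x}) J"
      using cell_unique by (auto simp: disjoint_family_on_def J_def)
    show "finite J" by (rule finJ)
  qed
  also have "\<dots> = (\<Sum>i\<in>J. ennreal (zF \<mu> k v (Suc i) - zF \<mu> k v i))"
    by (intro sum.cong refl) (auto simp: RD.emeasure_eq_measure cell_measure J_def)
  also have "\<dots> = emeasure (nuQ \<mu> k v) A"
  proof -
    have qm: "qq \<in> measurable (point_measure {..<k} (\<lambda>i. ennreal (zF \<mu> k v (Suc i) - zF \<mu> k v i))) borel"
      by simp
    have "emeasure (nuQ \<mu> k v) A = emeasure (point_measure {..<k} (\<lambda>i. ennreal (zF \<mu> k v (Suc i) - zF \<mu> k v i))) (qq -` A \<inter> {..<k})"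
      unfolding nuQ_def qq_def[abs_def, symmetric] using emeasure_distr[OF qm A] by (simp add: space_point_measure)
    also have "qq -` A \<inter> {..<k} = J" by (auto simp: J_def)
    also have "emeasure (point_measure {..<k} (\<lambda>i. ennreal (zF \<mu> k v (Suc i) - zF \<mu> k v i))) J = (\<Sum>i\<in>J. ennreal (zF \<mu> k v (Suc i) - zF \<mu> k v i))"
      by (rule emeasure_point_measure_finite) (auto simp: J_def)
    finally show ?thesis by simp
  qed
  finally show "emeasure (distr \<mu> borel TT) A = emeasure (nuQ \<mu> k v) A" .
qed

end

context MUK begin

lemma nuQ_alt: "nuQ \<mu> k v = distr (point_measure {..<k} (\<lambda>i. ennreal (zF \<mu> k v (Suc i) - zF \<mu> k v i))) borel qq"
  unfolding nuQ_def qq_def[abs_def] by simp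

lemma AE_nuQ: "AE y in nuQ \<mu> k v. y \<in> qq ` {..<k}"
proof -
  have Q: "qq ` {..<k} \<in> sets borel" by (intro borel_closed finite_imp_closed) auto
  have qm: "qq \<in> measurable (point_measure {..<k} (\<lambda>i. ennreal (zF \<mu> k v (Suc i) - zF \<mu> k v i))) borel"
    by simp
  show ?thesis unfolding nuQ_alt
    by (subst AE_distr_iff[OF qm]) (use Q in \<open>auto simp: space_point_measure intro!: AE_I2\<close>)
qed

lemma W1_eq: "W1 \<mu> (nuQ \<mu> k v) = (\<integral>\<^sup>+ x. ennreal (D x) \<partial>\<mu>)"
proof (rule antisym)
  define \<pi>0 where "\<pi>0 = distr \<mu> (borel \<Otimes>\<^sub>M borel) (\<lambda>x. (x, TT x))"
  have idm: "(\<lambda>x. x) \<in> measurable \<mu> borel"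
    unfolding measurable_cong_sets[OF sb refl] by simp
  have pm: "(\<lambda>x. (x, TT x)) \<in> measurable \<mu> (borel \<Otimes>\<^sub>M borel)"
    using idm TT_meas_mu by (rule measurable_Pair)
  have cpl: "\<pi>0 \<in> couplings \<mu> (nuQ \<mu> k v)"
    unfolding couplings_def
  proof (intro CollectI conjI)
    show "sets \<pi>0 = sets (borel \<Otimes>\<^sub>M borel)" by (simp add: \<pi>0_def)
    have "distr \<pi>0 borel fst = distr \<mu> borel (fst \<circ> (\<lambda>x. (x, TT x)))"
      unfolding \<pi>0_def by (rule distr_distr[OF measurable_fst pm])
    also have "\<dots> = distr \<mu> borel (\<lambda>x. x)" by (simp add: comp_def)
    also have "\<dots> = \<mu>" using sb by (intro distr_id2) simp
    finally show "distr \<pi>0 borel fst = \<mu>" .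
    have "distr \<pi>0 borel snd = distr \<mu> borel (snd \<circ> (\<lambda>x. (x, TT x)))"
      unfolding \<pi>0_def by (rule distr_distr[OF measurable_snd pm])
    also have "\<dots> = distr \<mu> borel TT" by (simp add: comp_def)
    also have "\<dots> = nuQ \<mu> k v" by (rule distr_TT)
    finally show "distr \<pi>0 borel snd = nuQ \<mu> k v" .
  qed
  have "W1 \<mu> (nuQ \<mu> k v) \<le> (\<integral>\<^sup>+ p. ennreal \<bar>fst p - snd p\<bar> \<partial>\<pi>0)"
    unfolding W1_def by (rule INF_lower[OF cpl])
  also have "\<dots> = (\<integral>\<^sup>+ x. ennreal \<bar>x - TT x\<bar> \<partial>\<mu>)"
    unfolding \<pi>0_def by (subst nn_integral_distr[OF pm]) simp_all
  also have "\<dots> = (\<integral>\<^sup>+ x. ennreal (D x) \<partial>\<mu>)" by (simp add: TT_D)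
  finally show "W1 \<mu> (nuQ \<mu> k v) \<le> (\<integral>\<^sup>+ x. ennreal (D x) \<partial>\<mu>)" .
next
  show "(\<integral>\<^sup>+ x. ennreal (D x) \<partial>\<mu>) \<le> W1 \<mu> (nuQ \<mu> k v)"
    unfolding W1_def
  proof (rule INF_greatest)
    fix \<pi> assume "\<pi> \<in> couplings \<mu> (nuQ \<mu> k v)"
    then have s\<pi>: "sets \<pi> = sets (borel \<Otimes>\<^sub>M borel)" and d1: "distr \<pi> borel fst = \<mu>"
      and d2: "distr \<pi> borel snd = nuQ \<mu> k v"
      by (auto simp: couplings_def)
    have fm: "fst \<in> measurable \<pi> borel"
      unfolding measurable_cong_sets[OF s\<pi> refl] by (rule measurable_fst)
    have sm: "snd \<in> measurable \<pi> borel"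
      unfolding measurable_cong_sets[OF s\<pi> refl] by (rule measurable_snd)
    have Q: "qq ` {..<k} \<in> sets borel" by (intro borel_closed finite_imp_closed) auto
    have "AE y in distr \<pi> borel snd. y \<in> qq ` {..<k}" unfolding d2 by (rule AE_nuQ)
    then have AEs: "AE p in \<pi>. snd p \<in> qq ` {..<k}"
      by (subst (asm) AE_distr_iff[OF sm]) (use Q in auto)
    have "(\<integral>\<^sup>+ x. ennreal (D x) \<partial>\<mu>) = (\<integral>\<^sup>+ x. ennreal (D x) \<partial>distr \<pi> borel fst)" by (simp add: d1)
    also have "\<dots> = (\<integral>\<^sup>+ p. ennreal (D (fst p)) \<partial>\<pi>)"
      using D_meas by (subst nn_integral_distr[OF fm]) simp_all
    also have "\<dots> \<le> (\<integral>\<^sup>+ p. ennreal \<bar>fst p - snd p\<bar> \<partial>\<pi>)"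
    proof (rule nn_integral_mono_AE)
      show "AE p in \<pi>. ennreal (D (fst p)) \<le> ennreal \<bar>fst p - snd p\<bar>"
        using AEs by eventually_elim (auto intro!: ennreal_leI D_le)
    qed
    finally show "(\<integral>\<^sup>+ x. ennreal (D x) \<partial>\<mu>) \<le> (\<integral>\<^sup>+ p. ennreal \<bar>fst p - snd p\<bar> \<partial>\<pi>)" .
  qed
qed

end

context OS begin

lemma PM_Z: "v j = t \<Longrightarrow> PM n v x j = Z n x"
  by (simp add: PM_def mm_def)

lemma PM_lim: "v j = t \<Longrightarrow> (\<lambda>n. \<integral>x. \<bar>PM n v x j - q\<bar> \<partial>P n) \<longlonglongrightarrow> 0"
  using Z_lim by (simp add: PM_Z)

lemma PM_int: "v j = t \<Longrightarrow> n > 0 \<Longrightarrow> integrable (P n) (\<lambda>x. \<bar>PM n v x j - q\<bar>)"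
  using main_bound(1)[of n 1] by (simp add: PM_Z)

lemma PM_meas: "v j = t \<Longrightarrow> n > 0 \<Longrightarrow> (\<lambda>x. PM n v x j) \<in> borel_measurable (P n)"
  using Z_meas[of n] by (simp add: PM_Z)

end

lemma min_diff:
  fixes y q :: "nat \<Rightarrow> real"
  assumes fin: "finite J" and ne: "J \<noteq> {}"
  shows "\<bar>Min ((\<lambda>j. \<bar>a - y j\<bar>) ` J) - Min ((\<lambda>j. \<bar>a - q j\<bar>) ` J)\<bar> \<le> (\<Sum>j\<in>J. \<bar>y j - q j\<bar>)"
proof -
  let ?S = "(\<Sum>j\<in>J. \<bar>y j - q j\<bar>)"
  have le: "\<bar>y j - q j\<bar> \<le> ?S" if "j \<in> J" for j
    using fin that by (intro member_le_sum) auto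
  have 1: "Min ((\<lambda>j. \<bar>a - q j\<bar>) ` J) \<le> Min ((\<lambda>j. \<bar>a - y j\<bar>) ` J) + ?S"
  proof -
    have "Min ((\<lambda>j. \<bar>a - q j\<bar>) ` J) - ?S \<le> Min ((\<lambda>j. \<bar>a - y j\<bar>) ` J)"
    proof (intro Min.boundedI)
      show "finite ((\<lambda>j. \<bar>a - y j\<bar>) ` J)" using fin by simp
      show "(\<lambda>j. \<bar>a - y j\<bar>) ` J \<noteq> {}" using ne by simp
      fix b assume "b \<in> (\<lambda>j. \<bar>a - y j\<bar>) ` J"
      then obtain j where j: "j \<in> J" "b = \<bar>a - y j\<bar>" by auto
      have "Min ((\<lambda>j. \<bar>a - q j\<bar>) ` J) \<le> \<bar>a - q j\<bar>" using fin j by (intro Min_le) auto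
      then show "Min ((\<lambda>j. \<bar>a - q j\<bar>) ` J) - ?S \<le> b" using le[OF j(1)] j(2) by linarith
    qed
    then show ?thesis by linarith
  qed
  have 2: "Min ((\<lambda>j. \<bar>a - y j\<bar>) ` J) \<le> Min ((\<lambda>j. \<bar>a - q j\<bar>) ` J) + ?S"
  proof -
    have "Min ((\<lambda>j. \<bar>a - y j\<bar>) ` J) - ?S \<le> Min ((\<lambda>j. \<bar>a - q j\<bar>) ` J)"
    proof (intro Min.boundedI)
      show "finite ((\<lambda>j. \<bar>a - q j\<bar>) ` J)" using fin by simp
      show "(\<lambda>j. \<bar>a - q j\<bar>) ` J \<noteq> {}" using ne by simp
      fix b assume "b \<in> (\<lambda>j. \<bar>a - q j\<bar>) ` J"
      then obtain j where j: "j \<in> J" "b = \<bar>a - q j\<bar>" by auto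
      have "Min ((\<lambda>j. \<bar>a - y j\<bar>) ` J) \<le> \<bar>a - y j\<bar>" using fin j by (intro Min_le) auto
      then show "Min ((\<lambda>j. \<bar>a - y j\<bar>) ` J) - ?S \<le> b" using le[OF j(1)] j(2) by linarith
    qed
    then show ?thesis by linarith
  qed
  show ?thesis using 1 2 by linarith
qed

context MUK begin

abbreviation PP where "PP n \<equiv> PiM {..<n} (\<lambda>_. \<mu>)"

lemma OSj: "j < k \<Longrightarrow> OS \<mu> (v j) (qq j)"
  unfolding qq_def using v_range by (intro OS_inst) auto

lemma Ej_lim: "j < k \<Longrightarrow> (\<lambda>n. \<integral>x. \<bar>PM n v x j - qq j\<bar> \<partial>PP n) \<longlonglongrightarrow> 0"
  using OS.PM_lim[OF OSj] by blast

lemma Ej_int: "j < k \<Longrightarrow> n > 0 \<Longrightarrow> integrable (PP n) (\<lambda>x. \<bar>PM n v x j - qq j\<bar>)"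
  using OS.PM_int[OF OSj] by blast

lemma PM_meas: "j < k \<Longrightarrow> n > 0 \<Longrightarrow> (\<lambda>x. PM n v x j) \<in> borel_measurable (PP n)"
  using OS.PM_meas[OF OSj] by blast

lemma D_meas_mu: "D \<in> borel_measurable \<mu>"
  using D_meas unfolding measurable_cong_sets[OF sb refl] .

lemma D_int: "integrable \<mu> D"
proof (rule Bochner_Integration.integrable_bound[OF _ D_meas_mu])
  show "integrable \<mu> (\<lambda>x. \<bar>x\<bar> + \<bar>qq 0\<bar>)"
    using first_moment by (intro Bochner_Integration.integrable_add) auto
  show "AE x in \<mu>. norm (D x) \<le> norm (\<bar>x\<bar> + \<bar>qq 0\<bar>)"
  proof (intro AE_I2)
    fix x
    have "D x \<le> \<bar>x - qq 0\<bar>" using k_pos by (intro D_le) auto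
    then show "norm (D x) \<le> norm (\<bar>x\<bar> + \<bar>qq 0\<bar>)" using D_nonneg[of x] by simp
  qed
qed

definition Av :: "nat \<Rightarrow> (nat \<Rightarrow> real) \<Rightarrow> real" where
  "Av n x = (1 / real n) * (\<Sum>i<n. D (x i))"

definition Ev :: "nat \<Rightarrow> (nat \<Rightarrow> real) \<Rightarrow> real" where
  "Ev n x = (\<Sum>j<k. \<bar>PM n v x j - qq j\<bar>)"

lemma SC_close:
  assumes n: "n > 0"
  shows "\<bar>SC_pm k v n x - Av n x\<bar> \<le> Ev n x"
proof -
  have "SC_pm k v n x - Av n x = (1 / real n) * (\<Sum>i<n. Min ((\<lambda>j. \<bar>x i - PM n v x j\<bar>) ` {..<k}) - D (x i))"
    by (simp add: SC_pm_def SC_def Av_def sum_subtractf algebra_simps)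
  also have "\<bar>\<dots>\<bar> \<le> (1 / real n) * (\<Sum>i<n. \<bar>Min ((\<lambda>j. \<bar>x i - PM n v x j\<bar>) ` {..<k}) - D (x i)\<bar>)"
  proof -
    have "\<bar>\<Sum>i<n. Min ((\<lambda>j. \<bar>x i - PM n v x j\<bar>) ` {..<k}) - D (x i)\<bar> \<le> (\<Sum>i<n. \<bar>Min ((\<lambda>j. \<bar>x i - PM n v x j\<bar>) ` {..<k}) - D (x i)\<bar>)"
      by (rule sum_abs)
    then show ?thesis by (simp add: abs_mult divide_right_mono)
  qed
  also have "\<dots> \<le> (1 / real n) * (\<Sum>i<n. Ev n x)"
    unfolding Ev_def D_def
    by (intro mult_left_mono sum_mono min_diff kne) auto
  also have "\<dots> = Ev n x" using n by simp
  finally show ?thesis .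
qed

lemma SC_nonneg: "SC_pm k v n x \<ge> 0"
  unfolding SC_pm_def SC_def using kne
  by (intro mult_nonneg_nonneg sum_nonneg Min.boundedI) auto

lemma Av_int: "integrable (PP n) (Av n)"
  unfolding Av_def
  by (intro Bochner_Integration.integrable_mult_right Bochner_Integration.integrable_sum
      integrable_coord[OF prob _ D_meas_mu D_int]) auto

lemma Av_integral: "n > 0 \<Longrightarrow> integral\<^sup>L (PP n) (Av n) = integral\<^sup>L \<mu> D"
proof -
  assume n: "n > 0"
  have "integral\<^sup>L (PP n) (Av n) = (1 / real n) * integral\<^sup>L (PP n) (\<lambda>x. \<Sum>i<n. D (x i))"
    unfolding Av_def by (rule integral_mult_right_zero)
  also have "integral\<^sup>L (PP n) (\<lambda>x. \<Sum>i<n. D (x i)) = (\<Sum>i<n. integral\<^sup>L (PP n) (\<lambda>x. D (x i)))"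
    by (rule Bochner_Integration.integral_sum) (intro integrable_coord[OF prob _ D_meas_mu D_int], simp)
  also have "\<dots> = (\<Sum>i<n. integral\<^sup>L \<mu> D)"
    by (intro sum.cong refl expect_coord[OF prob _ D_meas_mu]) simp
  finally show ?thesis using n by simp
qed

lemma Ev_int: "n > 0 \<Longrightarrow> integrable (PP n) (Ev n)"
  unfolding Ev_def by (intro Bochner_Integration.integrable_sum Ej_int) auto

lemma Ev_lim: "(\<lambda>n. integral\<^sup>L (PP n) (Ev n)) \<longlonglongrightarrow> 0"
proof -
  have "(\<lambda>n. \<Sum>j<k. \<integral>x. \<bar>PM n v x j - qq j\<bar> \<partial>PP n) \<longlonglongrightarrow> 0"
    by (intro tendsto_null_sum Ej_lim) auto
  moreover have "eventually (\<lambda>n. (\<Sum>j<k. \<integral>x. \<bar>PM n v x j - qq j\<bar> \<partial>PP n) = integral\<^sup>L (PP n) (Ev n)) sequentially"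
  proof (rule eventually_sequentiallyI[of 1])
    fix n :: nat assume "1 \<le> n"
    then show "(\<Sum>j<k. \<integral>x. \<bar>PM n v x j - qq j\<bar> \<partial>PP n) = integral\<^sup>L (PP n) (Ev n)"
      unfolding Ev_def by (intro Bochner_Integration.integral_sum[symmetric] Ej_int) auto
  qed
  ultimately show ?thesis by (rule Lim_transform_eventually)
qed

lemma SC_meas: "n > 0 \<Longrightarrow> (\<lambda>x. SC_pm k v n x) \<in> borel_measurable (PP n)"
proof -
  assume n: "n > 0"
  have [measurable]: "(\<lambda>x. PM n v x j) \<in> borel_measurable (PP n)" if "j \<in> {..<k}" for j
    using PM_meas[of j n] that n by simp
  have [measurable]: "(\<lambda>x. x i) \<in> borel_measurable (PP n)" if "i \<in> {..<n}" for i
    using measurable_component_singleton[of i "{..<n}" "\<lambda>_. \<mu>"] that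
    unfolding measurable_cong_sets[OF refl sb] by simp
  show ?thesis unfolding SC_pm_def SC_def
    by (intro borel_measurable_times borel_measurable_const borel_measurable_sum borel_measurable_Min
        borel_measurable_abs borel_measurable_diff) auto
qed

lemma SC_int: "n > 0 \<Longrightarrow> integrable (PP n) (\<lambda>x. SC_pm k v n x)"
proof -
  assume n: "n > 0"
  show ?thesis
  proof (rule Bochner_Integration.integrable_bound[OF _ SC_meas[OF n]])
    show "integrable (PP n) (\<lambda>x. Av n x + Ev n x)"
      using Av_int Ev_int[OF n] by (rule Bochner_Integration.integrable_add)
    show "AE x in PP n. norm (SC_pm k v n x) \<le> norm (Av n x + Ev n x)"
    proof (intro AE_I2)
      fix x
      have "Av n x \<ge> 0" unfolding Av_def using D_nonneg by (intro mult_nonneg_nonneg sum_nonneg) auto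
      then show "norm (SC_pm k v n x) \<le> norm (Av n x + Ev n x)"
        using SC_close[OF n, of x] SC_nonneg[of n x] by simp
    qed
  qed
qed

lemma SC_lim: "(\<lambda>n. integral\<^sup>L (PP n) (\<lambda>x. SC_pm k v n x)) \<longlonglongrightarrow> integral\<^sup>L \<mu> D"
proof -
  have "(\<lambda>n. integral\<^sup>L (PP n) (\<lambda>x. SC_pm k v n x) - integral\<^sup>L \<mu> D) \<longlonglongrightarrow> 0"
  proof (rule Lim_null_comparison[OF _ Ev_lim])
    show "eventually (\<lambda>n. norm (integral\<^sup>L (PP n) (\<lambda>x. SC_pm k v n x) - integral\<^sup>L \<mu> D) \<le> integral\<^sup>L (PP n) (Ev n)) sequentially"
    proof (rule eventually_sequentiallyI[of 1])
      fix n :: nat assume "1 \<le> n"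
      then have n: "n > 0" by simp
      have "integral\<^sup>L (PP n) (\<lambda>x. SC_pm k v n x) - integral\<^sup>L \<mu> D
          = integral\<^sup>L (PP n) (\<lambda>x. SC_pm k v n x - Av n x)"
        using Av_integral[OF n] SC_int[OF n] Av_int by simp
      also have "norm \<dots> \<le> integral\<^sup>L (PP n) (\<lambda>x. norm (SC_pm k v n x - Av n x))"
        by (rule integral_norm_bound)
      also have "\<dots> \<le> integral\<^sup>L (PP n) (Ev n)"
        using SC_close[OF n] SC_int[OF n] Av_int Ev_int[OF n]
        by (intro integral_mono) auto
      finally show "norm (integral\<^sup>L (PP n) (\<lambda>x. SC_pm k v n x) - integral\<^sup>L \<mu> D) \<le> integral\<^sup>L (PP n) (Ev n)" .
    qed
  qed
  then show ?thesis by (rule LIM_zero_cancel)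
qed

lemma main_lim: "(\<lambda>n. \<integral>\<^sup>+ x. ennreal (SC_pm k v n x) \<partial>PP n) \<longlonglongrightarrow> W1 \<mu> (nuQ \<mu> k v)"
proof -
  have "(\<lambda>n. ennreal (integral\<^sup>L (PP n) (\<lambda>x. SC_pm k v n x))) \<longlonglongrightarrow> ennreal (integral\<^sup>L \<mu> D)"
    by (rule tendsto_ennrealI[OF SC_lim])
  moreover have "ennreal (integral\<^sup>L \<mu> D) = W1 \<mu> (nuQ \<mu> k v)"
    unfolding W1_eq using D_int D_nonneg by (intro nn_integral_eq_integral[symmetric]) auto
  moreover have "eventually (\<lambda>n. ennreal (integral\<^sup>L (PP n) (\<lambda>x. SC_pm k v n x)) = (\<integral>\<^sup>+ x. ennreal (SC_pm k v n x) \<partial>PP n)) sequentially"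
  proof (rule eventually_sequentiallyI[of 1])
    fix n :: nat assume "1 \<le> n"
    then have n: "n > 0" by simp
    show "ennreal (integral\<^sup>L (PP n) (\<lambda>x. SC_pm k v n x)) = (\<integral>\<^sup>+ x. ennreal (SC_pm k v n x) \<partial>PP n)"
      using SC_int[OF n] SC_nonneg by (intro nn_integral_eq_integral[symmetric]) auto
  qed
  ultimately show ?thesis by (auto intro: Lim_transform_eventually)
qed

end

theorem lemma2:
  fixes \<mu> :: "real measure" and \<rho> :: "real \<Rightarrow> real" and I :: "real set"
    and k :: nat and v :: "nat \<Rightarrow> real"
  assumes prob: "prob_space \<mu>"
    and dens_meas: "\<rho> \<in> borel_measurable borel"
    and dens_nonneg: "\<And>x. \<rho> x \<ge> 0"
    and dens: "\<mu> = density lborel (\<lambda>x. ennreal (\<rho> x))"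
    and I_interval: "is_interval I" and I_closed: "closed I"
    and dens_pos: "\<And>x. x \<in> interior I \<Longrightarrow> \<rho> x > 0"
    and dens_zero: "\<And>x. x \<notin> I \<Longrightarrow> \<rho> x = 0"
    and dens_diff: "\<And>x. x \<in> I \<Longrightarrow> \<rho> differentiable (at x within I)"
    and first_moment: "integrable \<mu> (\<lambda>x. \<bar>x\<bar>)"
    and k_pos: "k \<ge> 1"
    and v_range: "\<And>j. j < k \<Longrightarrow> 0 < v j \<and> v j < 1"
    and v_sorted: "\<And>i j. i \<le> j \<Longrightarrow> j < k \<Longrightarrow> v i \<le> v j"
  shows "(\<lambda>n. \<integral>\<^sup>+ x. ennreal (SC_pm k v n x) \<partial>(PiM {..<n} (\<lambda>_. \<mu>)))
           \<longlonglongrightarrow> W1 \<mu> (nuQ \<mu> k v)"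
proof -
  interpret MUK \<mu> \<rho> I k v
    by (rule MUK.intro, rule MU.intro) (fact | assumption | rule MUK_axioms.intro)+
  show ?thesis by (rule main_lim)
qed

end
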